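(* Let $G$ be a connected graph with $13$ vertices. Suppose one of the following holds: (1) $\Delta(G)=12$ and $e(G)=13+k$ for some $1\le k\le 10$; (2) $\Delta(G)=11$ and $e(G)=13+k$ for some $5\le k\le 10$; (3) $\Delta(G)=10$ and $e(G)=13+k$ for some $8\le k\le 10$. Then $R(G)>\sqrt{12}+\frac{2(k+1)}{13\sqrt{12}}$.
   Context: All graphs are finite and simple; $e(G)$ is the number of edges and $\Delta(G)$ the maximum degree. For a vertex $u$, $d(u)$ is its degree. The Randić index is $R(G)=\sum_{\{u,v\}\in E(G)} \frac{1}{\sqrt{d(u)d(v)}}$. *)

theory Defs
  imports Complex_Main
begin

definition simple_graph :: "'a set \<Rightarrow> 'a set set \<Rightarrow> bool" where
  "simple_graph V E \<longleftrightarrow> finite V \<and> (\<forall>e\<in>E. e \<subseteq> V \<and> card e = 2)"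

definition degree :: "'a set set \<Rightarrow> 'a \<Rightarrow> nat" where
  "degree E v = card {e \<in> E. v \<in> e}"

definition max_degree :: "'a set \<Rightarrow> 'a set set \<Rightarrow> nat" where
  "max_degree V E = Max (degree E ` V)"

definition adj_rel :: "'a set set \<Rightarrow> ('a \<times> 'a) set" where
  "adj_rel E = {(x, y). {x, y} \<in> E}"

definition connected_graph :: "'a set \<Rightarrow> 'a set set \<Rightarrow> bool" where
  "connected_graph V E \<longleftrightarrow> V \<noteq> {} \<and> (\<forall>u\<in>V. \<forall>v\<in>V. (u, v) \<in> (adj_rel E)\<^sup>*)"

definition randic :: "'a set set \<Rightarrow> real" where
  "randic E = (\<Sum>e\<in>E. 1 / sqrt (\<Prod>v\<in>e. real (degree E v)))"

end

theory Submission
  imports Defs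
begin

lemma c12: "(1::nat) \<le> a \<Longrightarrow> a \<le> 12 \<Longrightarrow> a=1 \<or> a=2 \<or> a=3 \<or> a=4 \<or> a=5 \<or> a=6 \<or> a=7 \<or> a=8 \<or> a=9 \<or> a=10 \<or> a=11 \<or> a=12"
  by arith

lemma poly_aux: fixes a b :: nat assumes "1 \<le> a" "a \<le> 12" "1 \<le> b" "b \<le> 12"
  shows "(112*(a+b)+23*a*b)^2 \<le> 250000*a*b"
  using c12[OF assms(1,2)] c12[OF assms(3,4)] by auto

lemma edge_bound: fixes a b :: nat assumes "1 \<le> a" "a \<le> 12" "1 \<le> b" "b \<le> 12"
  shows "(112/500) * (1 / real a + 1 / real b) + 23/500 \<le> 1 / sqrt (real a * real b)"
proof -
  define x :: real where "x = (112*(real a+real b)+23*real a*real b)/500"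
  have "real ((112*(a+b)+23*a*b)^2) \<le> real (250000*a*b)"
    using poly_aux[OF assms] by linarith
  hence "(112*(real a+real b)+23*real a*real b)^2 \<le> 250000*real a*real b" by simp
  hence "x^2 \<le> real a * real b" unfolding x_def by (simp add: power_divide)
  hence xs: "x \<le> sqrt (real a * real b)" using real_le_rsqrt by blast
  have pa: "real a > 0" "real b > 0" using assms by auto
  have "(112/500) * (1 / real a + 1 / real b) + 23/500 = x / (real a * real b)"
    unfolding x_def using pa by (simp add: field_simps)
  also have "\<dots> \<le> sqrt (real a * real b) / (real a * real b)"
    by (rule divide_right_mono[OF xs]) (use pa in simp)
  also have "\<dots> = 1 / sqrt (real a * real b)"
  proof -
    have y: "real a * real b > 0" using pa by simp
    hence sp: "sqrt (real a * real b) > 0" by simp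
    have "sqrt (real a * real b) * sqrt (real a * real b) = real a * real b"
      using y by simp
    thus ?thesis using y sp by (simp add: divide_simps)
  qed
  finally show ?thesis .
qed

theorem lemma3p7:
  fixes V :: "'a set" and E :: "'a set set" and k :: nat
  assumes "simple_graph V E" and "connected_graph V E" and "card V = 13"
    and "card E = 13 + k"
    and "(max_degree V E = 12 \<and> 1 \<le> k \<and> k \<le> 10) \<or>
         (max_degree V E = 11 \<and> 5 \<le> k \<and> k \<le> 10) \<or>
         (max_degree V E = 10 \<and> 8 \<le> k \<and> k \<le> 10)"
  shows "randic E > sqrt 12 + 2 * (real k + 1) / (13 * sqrt 12)"
proof -
  have finV: "finite V" and sub: "\<And>e. e \<in> E \<Longrightarrow> e \<subseteq> V \<and> card e = 2"
    using assms(1) unfolding simple_graph_def by auto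
  have finE: "finite E" using assms(4) card.infinite by fastforce
  have k10: "k \<le> 10" using assms(5) by auto
  have md: "max_degree V E \<le> 12" using assms(5) by auto
  have dle: "degree E v \<le> 12" if "v \<in> V" for v
  proof -
    have "degree E v \<le> Max (degree E ` V)" using finV that by auto
    thus ?thesis using md unfolding max_degree_def by linarith
  qed
  have dge: "degree E v \<ge> 1" if "v \<in> e" "e \<in> E" for v e
  proof -
    have "finite {e \<in> E. v \<in> e}" using finE by auto
    moreover have "e \<in> {e \<in> E. v \<in> e}" using that by auto
    ultimately have "card {e \<in> E. v \<in> e} > 0" using card_gt_0_iff by blast
    thus ?thesis unfolding degree_def by simp
  qed
  have dpos: "degree E v \<ge> 1" if "v \<in> V" for v
  proof -
    have "\<not> V \<subseteq> {v}"
    proof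
      assume "V \<subseteq> {v}"
      hence "card V \<le> card {v}" by (rule card_mono[rotated]) simp
      thus False using assms(3) by simp
    qed
    hence "V - {v} \<noteq> {}" by blast
    then obtain u where u: "u \<in> V" "u \<noteq> v" by blast
    have "(v, u) \<in> (adj_rel E)\<^sup>*" using assms(2) u that unfolding connected_graph_def by blast
    then obtain w where "(v, w) \<in> adj_rel E" using u(2) by (metis converse_rtranclE)
    hence "{v, w} \<in> E" unfolding adj_rel_def by auto
    thus ?thesis using dge by blast
  qed
  define f :: "'a set \<Rightarrow> real" where
    "f e = (112/500) * (\<Sum>v\<in>e. 1 / real (degree E v)) + 23/500" for e
  have edge: "f e \<le> 1 / sqrt (\<Prod>v\<in>e. real (degree E v))" if eE: "e \<in> E" for e
  proof -
    obtain u w where e: "e = {u, w}" "u \<noteq> w" using sub[OF eE] by (meson card_2_iff)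
    have uw: "u \<in> V" "w \<in> V" using sub[OF eE] e by auto
    have d1: "1 \<le> degree E u" "1 \<le> degree E w" using dge[of u e] dge[of w e] eE e by auto
    have p: "(\<Prod>v\<in>e. real (degree E v)) = real (degree E u) * real (degree E w)" using e by simp
    have q: "(\<Sum>v\<in>e. 1 / real (degree E v)) = 1 / real (degree E u) + 1 / real (degree E w)" using e by simp
    show ?thesis unfolding f_def p q
      by (rule edge_bound[OF d1(1) dle[OF uw(1)] d1(2) dle[OF uw(2)]])
  qed
  have sumswap: "(\<Sum>e\<in>E. \<Sum>v\<in>e. 1 / real (degree E v)) = (\<Sum>v\<in>V. \<Sum>e\<in>{e\<in>E. v \<in> e}. 1 / real (degree E v))"
  proof -
    have "(\<Sum>e\<in>E. \<Sum>v\<in>e. 1 / real (degree E v)) = (\<Sum>e\<in>E. \<Sum>v\<in>{v\<in>V. v \<in> e}. 1 / real (degree E v))"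
    proof (rule sum.cong)
      fix e assume "e \<in> E"
      hence "{v\<in>V. v \<in> e} = e" using sub by blast
      thus "(\<Sum>v\<in>e. 1 / real (degree E v)) = (\<Sum>v\<in>{v\<in>V. v \<in> e}. 1 / real (degree E v))" by simp
    qed simp
    also have "\<dots> = (\<Sum>v\<in>V. \<Sum>e\<in>{e\<in>E. v \<in> e}. 1 / real (degree E v))"
      by (rule sum.swap_restrict[OF finE finV])
    finally show ?thesis .
  qed
  have "(\<Sum>v\<in>V. \<Sum>e\<in>{e\<in>E. v \<in> e}. 1 / real (degree E v)) = (\<Sum>v\<in>V. 1)"
  proof (rule sum.cong)
    fix v assume "v \<in> V"
    thus "(\<Sum>e\<in>{e\<in>E. v \<in> e}. 1 / real (degree E v)) = 1"
      using dpos[of v] by (simp add: degree_def[symmetric])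
  qed simp
  hence S13: "(\<Sum>e\<in>E. \<Sum>v\<in>e. 1 / real (degree E v)) = 13" using sumswap assms(3) by simp
  have "(\<Sum>e\<in>E. f e) = (112/500) * (\<Sum>e\<in>E. \<Sum>v\<in>e. 1 / real (degree E v)) + (\<Sum>e\<in>E. 23/500)"
    unfolding f_def by (simp add: sum.distrib sum_distrib_left)
  also have "\<dots> = 351/100 + 23/500 * real k" using assms(4) S13 by (simp add: field_simps)
  finally have fs: "(\<Sum>e\<in>E. f e) = 351/100 + 23/500 * real k" .
  have R: "randic E \<ge> 351/100 + 23/500 * real k"
    unfolding randic_def using fs sum_mono[of E f, OF edge] by simp
  define x where "x = sqrt (12::real)"
  have x2: "x * x = 12" unfolding x_def by simp
  have xp: "x > 0" unfolding x_def by simp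
  have xl: "x > 34641/10000"
  proof -
    have "sqrt ((34641/10000)^2) < sqrt (12::real)" by (subst real_sqrt_less_iff) (simp add: power2_eq_square)
    thus ?thesis unfolding x_def by simp
  qed
  have xk: "x * real k \<ge> 34641/10000 * real k" by (rule mult_right_mono) (use xl in auto)
  have a1: "2 < 4563/100 * x - 156" using xl by linarith
  have kp: "real k \<ge> 0" by simp
  have a2: "2 * real k \<le> 299/500 * (x * real k)" using xk kp by linarith
  have eq: "(351/100 + 23/500 * real k - x) * (13 * x) = 4563/100 * x + 299/500 * (x * real k) - 13 * (x * x)"
    by (simp add: algebra_simps)
  have "2 * (real k + 1) < (351/100 + 23/500 * real k - x) * (13 * x)"
    unfolding eq x2 using add_less_le_mono[OF a1 a2] by (simp add: algebra_simps)
  hence "2 * (real k + 1) / (13 * x) < 351/100 + 23/500 * real k - x"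
    using xp by (simp add: divide_less_eq)
  hence "2 * (real k + 1) / (13 * x) + x < 351/100 + 23/500 * real k" by (simp only: less_diff_eq)
  hence "x + 2 * (real k + 1) / (13 * x) < randic E" using R by (simp add: add.commute)
  thus ?thesis unfolding x_def .
qed

end
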